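(* In the setting below, suppose the step size satisfies $0<\eta\le \frac{1}{L(K+1)}$. Then for every $k\ge 0$ the iterates of the PIAG method satisfy \[ F_{k+1}\le F_k-\frac{1}{2}\eta\|d_k\|^2+\eta^2\frac{L}{2}\sum_{j=(k-K)_+}^{k-1}\|d_j\|^2 . \]
   Context: Let $m,n\ge 1$ be integers and $\|\cdot\|$ the Euclidean norm on $\mathbb{R}^n$. For $i=1,\dots,m$, let $f_i:\mathbb{R}^n\to\mathbb{R}$ be continuously differentiable with $\|\nabla f_i(x)-\nabla f_i(y)\|\le L_i\|x-y\|$ for all $x,y$, where $L_i\ge 0$ (the $f_i$ are not assumed convex). Let $f=\frac1m\sum_{i=1}^m f_i$ and $L=\frac1m\sum_{i=1}^m L_i$. Assume $f$ is $\mu$-strongly convex for some $\mu>0$ (i.e. $x\mapsto f(x)-\frac{\mu}{2}\|x\|^2$ is convex). Let $r:\mathbb{R}^n\to(-\infty,\infty]$ be proper, closed and convex, let $F=f+r$, and let $x^*$ be the unique minimizer of $F$. For $\eta>0$ define $\mathrm{prox}_r^\eta(y)=\arg\min_{x\in\mathbb{R}^n}\{\frac12\|x-y\|^2+\eta r(x)\}$. PIAG method: fix an integer $K\ge 0$, a step size $\eta>0$ and $x_0\in\mathbb{R}^n$; for each $k\ge0$ and each $i$ let $\tau_{i,k}$ be any (deterministically chosen) integer with $\max(k-K,0)\le\tau_{i,k}\le k$; set $g_k=\frac1m\sum_{i=1}^m\nabla f_i(x_{\tau_{i,k}})$ and $x_{k+1}=\mathrm{prox}_r^\eta(x_k-\eta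 g_k)$. Define $d_k=(x_{k+1}-x_k)/\eta$ (equivalently $d_k=-g_k-h_{k+1}$, where $h_{k+1}\in\partial r(x_{k+1})$ is given by the optimality condition of the proximal step), and $F_k=F(x_k)-F(x^* )$. Write $(t)_+=\max(t,0)$; empty sums are zero. *)

theory Defs
  imports "HOL-Analysis.Analysis" "HOL-Library.Extended_Real"
begin

definition proper_fun :: "('a \<Rightarrow> ereal) \<Rightarrow> bool" where
  "proper_fun r \<longleftrightarrow> (\<forall>x. r x \<noteq> -\<infinity>) \<and> (\<exists>x. r x \<noteq> \<infinity>)"

definition epigraph_e :: "('a \<Rightarrow> ereal) \<Rightarrow> ('a \<times> real) set" where
  "epigraph_e r = {(x, t). r x \<le> ereal t}"

definition closed_fun :: "('a::topological_space \<Rightarrow> ereal) \<Rightarrow> bool" where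
  "closed_fun r \<longleftrightarrow> closed (epigraph_e r)"

definition convex_fun :: "('a::real_vector \<Rightarrow> ereal) \<Rightarrow> bool" where
  "convex_fun r \<longleftrightarrow> convex (epigraph_e r)"

definition is_prox :: "('a::real_normed_vector \<Rightarrow> ereal) \<Rightarrow> real \<Rightarrow> 'a \<Rightarrow> 'a \<Rightarrow> bool" where
  "is_prox r \<eta> y p \<longleftrightarrow>
     (\<forall>z. ereal (norm (p - y)^2 / 2) + ereal \<eta> * r p \<le> ereal (norm (z - y)^2 / 2) + ereal \<eta> * r z)"

end

theory Submission
  imports Defs
begin

lemma descent:
  fixes \<phi> :: "'a::euclidean_space \<Rightarrow> real" and G :: "'a \<Rightarrow> 'a"
  assumes der: "\<And>y. (\<phi> has_derivative (\<lambda>h. G y \<bullet> h)) (at y)"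
    and lip: "\<And>y z. norm (G y - G z) \<le> c * norm (y - z)"
  shows "\<phi> y \<le> \<phi> x + G x \<bullet> (y - x) + c/2 * norm (y-x)^2"
proof -
  define h where "h = y - x"
  define \<psi> where "\<psi> = (\<lambda>t. \<phi> (x + t *\<^sub>R h) - t * (G x \<bullet> h) - c/2 * t^2 * norm h ^ 2)"
  have D: "DERIV \<psi> t :> (G (x + t *\<^sub>R h) \<bullet> h - G x \<bullet> h - c * t * norm h ^ 2)" for t
  proof -
    have l: "((\<lambda>t. x + t *\<^sub>R h) has_derivative (\<lambda>s. s *\<^sub>R h)) (at t)"
      by (auto intro!: derivative_eq_intros)
    have c1: "((\<lambda>t. \<phi> (x + t *\<^sub>R h)) has_derivative (\<lambda>s. G (x + t *\<^sub>R h) \<bullet> (s *\<^sub>R h))) (at t)"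
      using has_derivative_compose[OF l der] .
    have c1': "((\<lambda>t. \<phi> (x + t *\<^sub>R h)) has_real_derivative (G (x + t *\<^sub>R h) \<bullet> h)) (at t)"
      unfolding has_field_derivative_def using c1 by (simp add: mult.commute[of _ "G (x + t *\<^sub>R h) \<bullet> h"])
    show ?thesis unfolding \<psi>_def
      by (rule derivative_eq_intros c1' | simp)+
  qed
  have "\<psi> 1 \<le> \<psi> 0"
  proof (rule DERIV_nonpos_imp_nonincreasing[of 0 1])
    fix t :: real assume t: "0 \<le> t" "t \<le> 1"
    have "G (x + t *\<^sub>R h) \<bullet> h - G x \<bullet> h = (G (x + t *\<^sub>R h) - G x) \<bullet> h" by (simp add: inner_diff_left)
    also have "\<dots> \<le> norm (G (x + t *\<^sub>R h) - G x) * norm h" by (rule norm_cauchy_schwarz)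
    also have "\<dots> \<le> c * norm (t *\<^sub>R h) * norm h" using lip[of "x + t *\<^sub>R h" x] by (intro mult_right_mono) auto
    also have "\<dots> = c * t * norm h ^ 2" using t by (simp add: power2_eq_square)
    finally have le: "G (x + t *\<^sub>R h) \<bullet> h - G x \<bullet> h - c * t * norm h ^ 2 \<le> 0" by simp
    show "\<exists>y. DERIV \<psi> t :> y \<and> y \<le> 0" using D[of t] le by blast
  qed simp
  then show ?thesis unfolding \<psi>_def h_def by (simp add: algebra_simps)
qed

lemma normexp: fixes v w :: "'a::real_inner"
  shows "norm (v + t *\<^sub>R w)^2 = norm v^2 + 2*t*(v \<bullet> w) + t^2 * norm w^2"
  by (simp only: power2_norm_eq_inner) (simp add: inner_add_left inner_add_right inner_commute power2_eq_square algebra_simps)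

lemma prox_vi:
  fixes r :: "'a::euclidean_space \<Rightarrow> ereal"
  assumes conv: "convex_fun r" and nomin: "\<And>x. r x \<noteq> -\<infinity>"
    and prox: "is_prox r \<eta> y p" and eta: "\<eta> > 0" and rz: "r z \<noteq> \<infinity>"
  shows "r p \<noteq> \<infinity> \<and> \<eta> * real_of_ereal (r p) \<le> (p - y) \<bullet> (z - p) + \<eta> * real_of_ereal (r z)"
proof -
  have P: "ereal (norm (p - y)^2 / 2) + ereal \<eta> * r p \<le> ereal (norm (w - y)^2 / 2) + ereal \<eta> * r w" for w
    using prox unfolding is_prox_def by blast
  have rpf: "r p \<noteq> \<infinity>"
  proof
    assume "r p = \<infinity>"
    then have "ereal (norm (p - y)^2 / 2) + ereal \<eta> * r p = \<infinity>" using eta by simp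
    moreover have "ereal (norm (z - y)^2 / 2) + ereal \<eta> * r z \<noteq> \<infinity>" using rz nomin[of z] eta
      by (cases "r z") auto
    ultimately show False using P[of z] by (metis ereal_infty_less_eq(1))
  qed
  define a where "a = real_of_ereal (r p)"
  define b where "b = real_of_ereal (r z)"
  have ra: "r p = ereal a" using rpf nomin[of p] unfolding a_def by (cases "r p") auto
  have rb: "r z = ereal b" using rz nomin[of z] unfolding b_def by (cases "r z") auto
  have key: "\<eta> * a \<le> (p - y) \<bullet> (z - p) + \<eta> * b + t/2 * norm (z - p)^2" if t: "0 < t" "t < 1" for t
  proof -
    define zt where "zt = (1 - t) *\<^sub>R p + t *\<^sub>R z"
    have ep: "(p, a) \<in> epigraph_e r" "(z, b) \<in> epigraph_e r" unfolding epigraph_e_def using ra rb by auto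
    have "(1 - t) *\<^sub>R (p, a) + t *\<^sub>R (z, b) \<in> epigraph_e r"
      using conv ep t unfolding convex_fun_def convex_def
      by (meson add_diff_cancel_left' diff_ge_0_iff_ge less_eq_real_def diff_add_cancel)
    then have rzt: "r zt \<le> ereal ((1 - t) * a + t * b)" unfolding epigraph_e_def zt_def by simp
    have "ereal (norm (p - y)^2 / 2 + \<eta> * a) = ereal (norm (p - y)^2 / 2) + ereal \<eta> * r p" using ra by simp
    also have "\<dots> \<le> ereal (norm (zt - y)^2 / 2) + ereal \<eta> * r zt" by (rule P)
    also have "\<dots> \<le> ereal (norm (zt - y)^2 / 2) + ereal \<eta> * ereal ((1 - t) * a + t * b)"
      using rzt eta by (intro add_left_mono ereal_mult_left_mono) auto
    finally have I: "norm (p - y)^2 / 2 + \<eta> * a \<le> norm (zt - y)^2 / 2 + \<eta> * ((1 - t) * a + t * b)" by simp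
    have "zt - y = (p - y) + t *\<^sub>R (z - p)" unfolding zt_def by (simp add: algebra_simps)
    then have "norm (zt - y)^2 = norm (p - y)^2 + 2*t*((p - y) \<bullet> (z - p)) + t^2 * norm (z - p)^2"
      using normexp by metis
    with I have "t * (\<eta> * a) \<le> t * ((p - y) \<bullet> (z - p) + \<eta> * b + t/2 * norm (z - p)^2)"
      by (simp add: algebra_simps power2_eq_square)
    then show ?thesis using t by simp
  qed
  have "\<eta> * a \<le> (p - y) \<bullet> (z - p) + \<eta> * b"
  proof (rule field_le_epsilon)
    fix e :: real assume e: "0 < e"
    define t where "t = min (1/2) (e / (norm (z - p)^2 + 1))"
    have epos: "0 < e / (norm (z - p)^2 + 1)" using e by (intro divide_pos_pos) (auto intro: add_nonneg_pos)
    then have t0: "0 < t" "t < 1" unfolding t_def by auto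
    have "t * norm (z - p)^2 \<le> e / (norm (z - p)^2 + 1) * (norm (z - p)^2 + 1)"
      unfolding t_def using epos by (intro mult_mono) auto
    also have "\<dots> = e"
    proof -
      have "norm (z - p)^2 + 1 \<noteq> 0" using zero_le_power2[of "norm (z - p)"] by linarith
      then show ?thesis by simp
    qed
    finally have "t/2 * norm (z - p)^2 \<le> e" using e by simp
    then show "\<eta> * a \<le> (p - y) \<bullet> (z - p) + \<eta> * b + e" using key[OF t0] by linarith
  qed
  then show ?thesis using rpf a_def b_def by simp
qed

lemma telescope:
  fixes x :: "nat \<Rightarrow> 'a::real_normed_vector"
  assumes "a \<le> b"
  shows "norm (x b - x a) \<le> (\<Sum>j\<in>{a..<b}. norm (x (Suc j) - x j))"
  using assms
proof (induction b rule: dec_induct)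
  case base then show ?case by simp
next
  case (step n)
  have "norm (x (Suc n) - x a) \<le> norm (x (Suc n) - x n) + norm (x n - x a)"
    by (rule order_trans[OF _ norm_triangle_ineq]) simp
  then show ?case using step by simp
qed

theorem lemma1:
  fixes fi :: "nat \<Rightarrow> 'a::euclidean_space \<Rightarrow> real"
    and gi :: "nat \<Rightarrow> 'a \<Rightarrow> 'a"
    and Li :: "nat \<Rightarrow> real"
    and m K :: nat and \<mu> \<eta> :: real
    and r :: "'a \<Rightarrow> ereal"
    and xs :: 'a
    and x :: "nat \<Rightarrow> 'a"
    and \<tau> :: "nat \<Rightarrow> nat \<Rightarrow> nat"
    and f :: "'a \<Rightarrow> real" and L :: real and F :: "'a \<Rightarrow> ereal"
    and g d :: "nat \<Rightarrow> 'a" and Fk :: "nat \<Rightarrow> ereal"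
  assumes f_def: "f = (\<lambda>y. (\<Sum>i<m. fi i y) / real m)"
    and L_def: "L = (\<Sum>i<m. Li i) / real m"
    and F_def: "F = (\<lambda>y. ereal (f y) + r y)"
    and g_def: "g = (\<lambda>k. (1 / real m) *\<^sub>R (\<Sum>i<m. gi i (x (\<tau> i k))))"
    and d_def: "d = (\<lambda>k. (1 / \<eta>) *\<^sub>R (x (Suc k) - x k))"
    and Fk_def: "Fk = (\<lambda>k. F (x k) - F xs)"
    and m_pos: "m \<ge> 1"
    and grad: "\<And>i y. i < m \<Longrightarrow> (fi i has_derivative (\<lambda>h. gi i y \<bullet> h)) (at y)"
    and grad_cont: "\<And>i. i < m \<Longrightarrow> continuous_on UNIV (gi i)"
    and Lip: "\<And>i y z. i < m \<Longrightarrow> norm (gi i y - gi i z) \<le> Li i * norm (y - z)"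
    and Li_nonneg: "\<And>i. i < m \<Longrightarrow> Li i \<ge> 0"
    and mu_pos: "\<mu> > 0"
    and strongly_convex: "convex_on UNIV (\<lambda>y. f y - \<mu> / 2 * norm y ^ 2)"
    and r_proper: "proper_fun r" and r_closed: "closed_fun r" and r_convex: "convex_fun r"
    and xs_min: "\<And>y. F xs \<le> F y"
    and tau: "\<And>i k. i < m \<Longrightarrow> k - K \<le> \<tau> i k \<and> \<tau> i k \<le> k"
    and step: "\<And>k. is_prox r \<eta> (x k - \<eta> *\<^sub>R g k) (x (Suc k))"
    and eta_pos: "0 < \<eta>"
    and eta_le: "\<eta> * (L * (real K + 1)) \<le> 1"
  shows "Fk (Suc k) \<le> Fk k - ereal (\<eta> / 2 * norm (d k)^2)
            + ereal (\<eta>^2 * L / 2 * (\<Sum>j\<in>{k - K..<k}. norm (d j)^2))"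
proof -
  have nomin: "\<And>y. r y \<noteq> -\<infinity>" using r_proper unfolding proper_fun_def by blast
  obtain x0 where x0: "r x0 \<noteq> \<infinity>" using r_proper unfolding proper_fun_def by blast
  have "F xs \<le> F x0" by (rule xs_min)
  also have "F x0 < \<infinity>" using x0 nomin[of x0] unfolding F_def by (cases "r x0") auto
  finally have "F xs \<noteq> \<infinity>" by simp
  then have rxsf: "r xs \<noteq> \<infinity>" unfolding F_def by auto
  define c where "c = f xs + real_of_ereal (r xs)"
  have Fxs: "F xs = ereal c" using rxsf nomin[of xs] unfolding F_def c_def by (cases "r xs") auto
  define S where "S = (\<Sum>j\<in>{k - K..<k}. norm (d j)^2)"
  define A where "A = \<eta> / 2 * norm (d k)^2"
  define B where "B = \<eta>^2 * L / 2 * S"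
  show ?thesis
  proof (cases "r (x k) = \<infinity>")
    case True
    then have "Fk k = \<infinity>" unfolding Fk_def F_def Fxs by simp
    then show ?thesis by simp
  next
    case False
    define z where "z = x k"
    define p where "p = x (Suc k)"
    define y where "y = x k - \<eta> *\<^sub>R g k"
    define \<Delta> where "\<Delta> = p - z"
    have VI: "r p \<noteq> \<infinity> \<and> \<eta> * real_of_ereal (r p) \<le> (p - y) \<bullet> (z - p) + \<eta> * real_of_ereal (r z)"
      using prox_vi[OF r_convex nomin step[of k] eta_pos, of z] False unfolding z_def p_def y_def by auto
    define a where "a = real_of_ereal (r z)"
    define b where "b = real_of_ereal (r p)"
    have ra: "r z = ereal a" using False nomin[of z] unfolding a_def z_def by (cases "r (x k)") auto
    have rb: "r p = ereal b" using VI nomin[of p] unfolding b_def by (cases "r p") auto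
    have Dd: "\<Delta> = \<eta> *\<^sub>R d k" unfolding \<Delta>_def d_def p_def z_def using eta_pos by simp
    have nD: "norm \<Delta> ^ 2 = \<eta>^2 * norm (d k)^2" unfolding Dd using eta_pos by (simp add: power_mult_distrib)
    have rineq: "\<eta> * b \<le> - (norm \<Delta> ^ 2) - \<eta> * (g k \<bullet> \<Delta>) + \<eta> * a"
    proof -
      have "(p - y) \<bullet> (z - p) = - (norm \<Delta> ^ 2) - \<eta> * (g k \<bullet> \<Delta>)"
        unfolding y_def \<Delta>_def z_def
        by (simp add: power2_norm_eq_inner inner_diff_left inner_diff_right inner_commute algebra_simps)
      then show ?thesis using VI unfolding a_def b_def by simp
    qed
    have cardK: "real (card {k - K..<k}) \<le> real K" by simp
    have per_i: "fi i p \<le> fi i z + gi i (x (\<tau> i k)) \<bullet> \<Delta> + Li i / 2 * norm \<Delta> ^ 2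
        + Li i * \<eta>^2 / 2 * (S + real K * norm (d k)^2)" if i: "i < m" for i
    proof -
      have desc: "fi i p \<le> fi i z + gi i z \<bullet> (p - z) + Li i / 2 * norm (p - z)^2"
        by (rule descent[OF grad[OF i] Lip[OF i]])
      define t where "t = \<tau> i k"
      have t: "k - K \<le> t" "t \<le> k" using tau[OF i] unfolding t_def by auto
      have "norm (z - x t) \<le> (\<Sum>j\<in>{t..<k}. norm (x (Suc j) - x j))"
        unfolding z_def using telescope[OF t(2)] by (simp add: norm_minus_commute)
      also have "\<dots> = (\<Sum>j\<in>{t..<k}. \<eta> * norm (d j))"
        unfolding d_def using eta_pos by (intro sum.cong) auto
      also have "\<dots> \<le> (\<Sum>j\<in>{k - K..<k}. \<eta> * norm (d j))"
        using t eta_pos by (intro sum_mono2) auto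
      finally have nz: "norm (z - x t) \<le> \<eta> * (\<Sum>j\<in>{k - K..<k}. norm (d j))"
        by (simp add: sum_distrib_left)
      have "(\<Sum>j\<in>{k - K..<k}. norm (d k) * norm (d j)) \<le> (\<Sum>j\<in>{k - K..<k}. (norm (d j)^2 + norm (d k)^2) / 2)"
      proof (rule sum_mono)
        fix j
        have "0 \<le> (norm (d j) - norm (d k))^2" by simp
        then show "norm (d k) * norm (d j) \<le> (norm (d j)^2 + norm (d k)^2) / 2"
          by (simp add: power2_eq_square algebra_simps)
      qed
      also have "\<dots> = (S + real (card {k - K..<k}) * norm (d k)^2) / 2"
        unfolding S_def by (simp add: sum.distrib sum_divide_distrib[symmetric])
      also have "\<dots> \<le> (S + real K * norm (d k)^2) / 2"
        using cardK by (intro divide_right_mono add_left_mono mult_right_mono) auto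
      finally have prodb: "norm (d k) * (\<Sum>j\<in>{k - K..<k}. norm (d j)) \<le> (S + real K * norm (d k)^2) / 2"
        by (simp add: sum_distrib_left)
      have "(gi i z - gi i (x t)) \<bullet> \<Delta> \<le> norm (gi i z - gi i (x t)) * norm \<Delta>"
        by (rule norm_cauchy_schwarz)
      also have "\<dots> \<le> (Li i * norm (z - x t)) * norm \<Delta>"
        using Lip[OF i] by (intro mult_right_mono) auto
      also have "\<dots> \<le> (Li i * (\<eta> * (\<Sum>j\<in>{k - K..<k}. norm (d j)))) * (\<eta> * norm (d k))"
        using nz Li_nonneg[OF i] eta_pos unfolding Dd by (intro mult_mono) (auto intro!: mult_nonneg_nonneg sum_nonneg)
      also have "\<dots> = Li i * \<eta>^2 * (norm (d k) * (\<Sum>j\<in>{k - K..<k}. norm (d j)))"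
        by (simp add: power2_eq_square algebra_simps)
      also have "\<dots> \<le> Li i * \<eta>^2 * ((S + real K * norm (d k)^2) / 2)"
        using prodb Li_nonneg[OF i] by (intro mult_left_mono) auto
      finally have cross: "(gi i z - gi i (x t)) \<bullet> \<Delta> \<le> Li i * \<eta>^2 * ((S + real K * norm (d k)^2) / 2)" .
      have X: "Li i * \<eta>^2 * ((S + real K * norm (d k)^2) / 2) = Li i * \<eta>^2 / 2 * (S + real K * norm (d k)^2)"
        by simp
      have cross': "gi i z \<bullet> \<Delta> - gi i (x t) \<bullet> \<Delta> \<le> Li i * \<eta>^2 / 2 * (S + real K * norm (d k)^2)"
        using cross X by (simp add: inner_diff_left)
      show ?thesis using desc cross' unfolding \<Delta>_def[symmetric] t_def
        by linarith
    qed
    have sumi: "(\<Sum>i<m. fi i p) \<le> (\<Sum>i<m. fi i z + gi i (x (\<tau> i k)) \<bullet> \<Delta> + Li i / 2 * norm \<Delta> ^ 2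
        + Li i * \<eta>^2 / 2 * (S + real K * norm (d k)^2))"
      using per_i by (intro sum_mono) auto
    have mpos: "real m > 0" using m_pos by simp
    have fp: "f p \<le> f z + g k \<bullet> \<Delta> + L / 2 * norm \<Delta> ^ 2 + L * \<eta>^2 / 2 * (S + real K * norm (d k)^2)"
    proof -
      have "f p * real m \<le> (\<Sum>i<m. fi i z) + (\<Sum>i<m. gi i (x (\<tau> i k)) \<bullet> \<Delta>) + (\<Sum>i<m. Li i) / 2 * norm \<Delta> ^ 2
        + (\<Sum>i<m. Li i) * \<eta>^2 / 2 * (S + real K * norm (d k)^2)"
      proof -
        have e1: "f p * real m = (\<Sum>i<m. fi i p)" using mpos unfolding f_def by simp
        have e2: "(\<Sum>i<m. fi i z + gi i (x (\<tau> i k)) \<bullet> \<Delta> + Li i / 2 * norm \<Delta> ^ 2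
          + Li i * \<eta>^2 / 2 * (S + real K * norm (d k)^2)) = (\<Sum>i<m. fi i z) + (\<Sum>i<m. gi i (x (\<tau> i k)) \<bullet> \<Delta>) + (\<Sum>i<m. Li i) / 2 * norm \<Delta> ^ 2
          + (\<Sum>i<m. Li i) * \<eta>^2 / 2 * (S + real K * norm (d k)^2)"
          by (simp add: sum.distrib sum_distrib_right sum_divide_distrib)
        show ?thesis using sumi e1 e2 by simp
      qed
      also have "\<dots> = (f z + g k \<bullet> \<Delta> + L / 2 * norm \<Delta> ^ 2 + L * \<eta>^2 / 2 * (S + real K * norm (d k)^2)) * real m"
        using mpos unfolding f_def g_def L_def by (simp add: inner_sum_left field_simps)
      finally show ?thesis using mpos by simp
    qed
    have Lnn: "L \<ge> 0" unfolding L_def using Li_nonneg by (intro divide_nonneg_nonneg sum_nonneg) auto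
    have etaL: "L * \<eta>^2 * (real K + 1) * norm (d k)^2 \<le> \<eta> * norm (d k)^2"
    proof -
      have "L * \<eta>^2 * (real K + 1) * norm (d k)^2 = (\<eta> * (L * (real K + 1))) * (\<eta> * norm (d k)^2)"
        by (simp add: power2_eq_square algebra_simps)
      also have "\<dots> \<le> 1 * (\<eta> * norm (d k)^2)"
        using eta_le eta_pos by (intro mult_right_mono) auto
      finally show ?thesis by simp
    qed
    have rb': "b \<le> - (\<eta> * norm (d k)^2) - g k \<bullet> \<Delta> + a"
    proof -
      have "\<eta> * b \<le> \<eta> * (- (\<eta> * norm (d k)^2) - g k \<bullet> \<Delta> + a)"
        using rineq nD by (simp add: power2_eq_square algebra_simps)
      then show ?thesis using eta_pos by simp
    qed
    have real_ineq: "f p + b - c \<le> f z + a - c - A + B"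
      using fp rb' etaL nD unfolding A_def B_def by (simp add: algebra_simps power2_eq_square)
    have Fp: "F p = ereal (f p + b)" unfolding F_def using rb by simp
    have Fz: "F z = ereal (f z + a)" unfolding F_def using ra by simp
    have "Fk (Suc k) = ereal (f p + b - c)" unfolding Fk_def using Fxs Fp p_def by simp
    moreover have "Fk k = ereal (f z + a - c)" unfolding Fk_def using Fxs Fz z_def by simp
    ultimately show ?thesis using real_ineq unfolding A_def[symmetric] S_def[symmetric] B_def[symmetric]
      by simp
  qed
qed

end
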